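(* Let $G$ be a connected cograph which is $k$-connected, and let $S$ be a minimal vertex separator of $G$ with $|S|=k$. Let $G_1,G_2,\ldots,G_m$, $m\geq 2$, be the connected components of $G\setminus S$. Then for every edge $\{u,v\}$ lying in a non-trivial component $G_i$ (i.e. one with at least two vertices), $N_G(u)\cap S=N_G(v)\cap S$.
   Context: A cograph is a graph that can be built from single vertices by repeatedly taking disjoint unions and joins; equivalently, a graph with no induced path on four vertices. Graphs are finite, simple, undirected. $N_G(v)$ is the set of neighbours of $v$ in $G$, and $G\setminus S$ is the subgraph induced on $V(G)\setminus S$. A vertex separator of a connected graph $G$ is a set $S\subset V(G)$ such that $G\setminus S$ is disconnected; it is minimal if no proper subset of $S$ is a vertex separator; a minimum vertex separator is a minimal vertex separator of least size. The paper calls $G$ $k$-connected if there exists a minimum vertex separator of size $k$ (i.e. the least size of a vertex separator is exactly $k$). A component is trivial if it has exactly one vertex. *)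

theory Defs
  imports Main
begin

definition sgraph :: "'a set \<Rightarrow> ('a \<Rightarrow> 'a \<Rightarrow> bool) \<Rightarrow> bool" where
  "sgraph V E \<longleftrightarrow> finite V \<and> (\<forall>x y. E x y \<longrightarrow> x \<in> V \<and> y \<in> V \<and> x \<noteq> y \<and> E y x)"

definition nbr :: "('a \<Rightarrow> 'a \<Rightarrow> bool) \<Rightarrow> 'a \<Rightarrow> 'a set" where
  "nbr E v = {w. E v w}"

definition connected_on :: "('a \<Rightarrow> 'a \<Rightarrow> bool) \<Rightarrow> 'a set \<Rightarrow> bool" where
  "connected_on E X \<longleftrightarrow> X \<noteq> {} \<and>
     (\<forall>x\<in>X. \<forall>y\<in>X. (\<lambda>a b. E a b \<and> a \<in> X \<and> b \<in> X)\<^sup>*\<^sup>* x y)"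

definition component :: "('a \<Rightarrow> 'a \<Rightarrow> bool) \<Rightarrow> 'a set \<Rightarrow> 'a set \<Rightarrow> bool" where
  "component E X C \<longleftrightarrow> C \<subseteq> X \<and> connected_on E C \<and>
     (\<forall>C'. C \<subseteq> C' \<and> C' \<subseteq> X \<and> connected_on E C' \<longrightarrow> C' = C)"

definition cograph :: "'a set \<Rightarrow> ('a \<Rightarrow> 'a \<Rightarrow> bool) \<Rightarrow> bool" where
  "cograph V E \<longleftrightarrow> sgraph V E \<and>
     \<not> (\<exists>a b c d. a \<in> V \<and> b \<in> V \<and> c \<in> V \<and> d \<in> V \<and> distinct [a, b, c, d] \<and>
          E a b \<and> E b c \<and> E c d \<and> \<not> E a c \<and> \<not> E a d \<and> \<not> E b d)"

definition vertex_separator :: "'a set \<Rightarrow> ('a \<Rightarrow> 'a \<Rightarrow> bool) \<Rightarrow> 'a set \<Rightarrow> bool" where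
  "vertex_separator V E S \<longleftrightarrow> S \<subset> V \<and> V - S \<noteq> {} \<and> \<not> connected_on E (V - S)"

definition minimal_separator :: "'a set \<Rightarrow> ('a \<Rightarrow> 'a \<Rightarrow> bool) \<Rightarrow> 'a set \<Rightarrow> bool" where
  "minimal_separator V E S \<longleftrightarrow> vertex_separator V E S \<and>
     (\<forall>T. T \<subset> S \<longrightarrow> \<not> vertex_separator V E T)"

definition minimum_separator :: "'a set \<Rightarrow> ('a \<Rightarrow> 'a \<Rightarrow> bool) \<Rightarrow> 'a set \<Rightarrow> bool" where
  "minimum_separator V E S \<longleftrightarrow> minimal_separator V E S \<and>
     (\<forall>T. minimal_separator V E T \<longrightarrow> card S \<le> card T)"

text \<open>The paper's k-connectedness: there is a minimum vertex separator of size k.\<close>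
definition k_connected :: "'a set \<Rightarrow> ('a \<Rightarrow> 'a \<Rightarrow> bool) \<Rightarrow> nat \<Rightarrow> bool" where
  "k_connected V E k \<longleftrightarrow> (\<exists>S. minimum_separator V E S \<and> card S = k)"

end

theory Submission
  imports Defs
begin

lemma no_cross_edge:
  assumes comp: "component E X C" and c: "c \<in> C" and y: "y \<in> X" "y \<notin> C"
    and e1: "E c y" and e2: "E y c"
  shows False
proof -
  let ?R1 = "\<lambda>a b. E a b \<and> a \<in> C \<and> b \<in> C"
  let ?R2 = "\<lambda>a b. E a b \<and> a \<in> insert y C \<and> b \<in> insert y C"
  have C: "C \<subseteq> X" "connected_on E C" using comp unfolding component_def by auto
  have mono: "?R1\<^sup>*\<^sup>* a b \<Longrightarrow> ?R2\<^sup>*\<^sup>* a b" for a b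
    by (rule rtranclp_mono[THEN predicate2D, rotated]) auto
  have inC: "a \<in> C \<Longrightarrow> b \<in> C \<Longrightarrow> ?R2\<^sup>*\<^sup>* a b" for a b
    using C(2) mono unfolding connected_on_def by blast
  have "connected_on E (insert y C)"
    unfolding connected_on_def
  proof (intro conjI ballI)
    fix a b assume a: "a \<in> insert y C" and b: "b \<in> insert y C"
    show "?R2\<^sup>*\<^sup>* a b"
    proof (cases "a = y")
      case True
      show ?thesis
      proof (cases "b = y")
        case True with \<open>a = y\<close> show ?thesis by simp
      next
        case False
        hence "b \<in> C" using b by auto
        have "?R2 y c" using e2 c by auto
        moreover have "?R2\<^sup>*\<^sup>* c b" using inC[OF c \<open>b \<in> C\<close>] .
        ultimately show ?thesis unfolding True by (rule converse_rtranclp_into_rtranclp)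
      qed
    next
      case False
      hence "a \<in> C" using a by auto
      show ?thesis
      proof (cases "b = y")
        case True
        have "?R2 c y" using e1 c by auto
        moreover have "?R2\<^sup>*\<^sup>* a c" using inC[OF \<open>a \<in> C\<close> c] .
        ultimately show ?thesis unfolding True by (rule rtranclp.rtrancl_into_rtrancl[rotated])
      next
        case False
        hence "b \<in> C" using b by auto
        show ?thesis using inC[OF \<open>a \<in> C\<close> \<open>b \<in> C\<close>] .
      qed
    qed
  qed simp
  moreover have "C \<subseteq> insert y C" "insert y C \<subseteq> X" using C y by auto
  ultimately have "insert y C = C" using comp unfolding component_def by blast
  with y show False by auto
qed

theorem lemma1:
  fixes V :: "'a set" and E :: "'a \<Rightarrow> 'a \<Rightarrow> bool" and S :: "'a set" and k :: nat
  assumes "cograph V E"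
    and "connected_on E V"
    and "k_connected V E k"
    and "minimal_separator V E S"
    and "card S = k"
    and "component E (V - S) C"
    and "card C \<ge> 2"
    and "u \<in> C" and "v \<in> C" and "E u v"
  shows "nbr E u \<inter> S = nbr E v \<inter> S"
proof -
  have sg: "sgraph V E" using assms(1) unfolding cograph_def by auto
  have sym: "E x y \<Longrightarrow> E y x" for x y using sg unfolding sgraph_def by auto
  have inV: "E x y \<Longrightarrow> x \<in> V \<and> y \<in> V \<and> x \<noteq> y" for x y using sg unfolding sgraph_def by auto
  have sep: "vertex_separator V E S" and minS: "\<And>T. T \<subset> S \<Longrightarrow> \<not> vertex_separator V E T"
    using assms(4) unfolding minimal_separator_def by auto
  have CX: "C \<subseteq> V - S" "connected_on E C" using assms(6) unfolding component_def by auto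
  obtain x where x: "x \<in> V - S" "x \<notin> C"
  proof -
    have "\<not> connected_on E (V - S)" using sep unfolding vertex_separator_def by auto
    hence "V - S \<noteq> C" using CX by auto
    thus ?thesis using that CX by blast
  qed
  have key: False if s: "s \<in> S" "E w s" "\<not> E w' s" and ww: "w \<in> C" "w' \<in> C" "E w w'" for s w w'
  proof -
    have "S - {s} \<subset> S" using s by auto
    hence ns: "\<not> vertex_separator V E (S - {s})" by (rule minS)
    have "S \<subset> V" using sep unfolding vertex_separator_def by auto
    hence "S - {s} \<subset> V" by auto
    moreover have "V - (S - {s}) \<noteq> {}" using x by auto
    ultimately have conn: "connected_on E (V - (S - {s}))" using ns unfolding vertex_separator_def by blast
    let ?X = "V - (S - {s})"
    let ?R = "\<lambda>a b. E a b \<and> a \<in> ?X \<and> b \<in> ?X"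
    have "\<exists>z. z \<in> V - S \<and> z \<notin> C \<and> E s z"
    proof (rule ccontr)
      assume nz: "\<not> ?thesis"
      have reach: "?R\<^sup>*\<^sup>* x b \<Longrightarrow> b \<in> V - S \<and> b \<notin> C" for b
      proof (induction rule: rtranclp_induct)
        case base then show ?case using x by auto
      next
        case (step b c)
        show ?case
        proof (cases "c = s")
          case True
          have "E b s" using step.hyps(2) True by blast
          hence "E s b" by (rule sym)
          moreover have "b \<in> V - S" "b \<notin> C" using step.IH by auto
          ultimately show ?thesis using nz by blast
        next
          case False
          hence "c \<in> V - S" using step.hyps(2) by blast
          moreover have "c \<notin> C"
          proof
            assume "c \<in> C"
            have "E b c" using step.hyps(2) by blast
            moreover have "b \<in> V - S" "b \<notin> C" using step.IH by auto
            ultimately show False using no_cross_edge[OF assms(6) \<open>c \<in> C\<close>, of b] sym[of b c] by blast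
          qed
          ultimately show ?thesis by auto
        qed
      qed
      moreover have "?R\<^sup>*\<^sup>* x w"
      proof -
        have "x \<in> ?X" "w \<in> ?X" using x ww(1) CX(1) by auto
        thus ?thesis using conn unfolding connected_on_def by blast
      qed
      ultimately show False using ww(1) reach by blast
    qed
    then obtain z where z: "z \<in> V - S" "z \<notin> C" "E s z" by auto
    have ew's: "\<not> E w' z" "\<not> E w z"
      using no_cross_edge[OF assms(6) ww(2) z(1) z(2)] no_cross_edge[OF assms(6) ww(1) z(1) z(2)] sym[of w' z] sym[of w z] by blast+
    have "w' \<in> V" "w \<in> V" "s \<in> V" "z \<in> V" using inV[OF ww(3)] inV[OF s(2)] inV[OF z(3)] by auto
    moreover have "distinct [w', w, s, z]" using inV[OF ww(3)] inV[OF s(2)] inV[OF z(3)] ww CX s z by auto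
    moreover have "E w' w" "E w s" "E s z" using sym[OF ww(3)] s z by auto
    moreover have "\<not> E w' s" "\<not> E w' z" "\<not> E w z" using s ew's by auto
    ultimately show False using assms(1) unfolding cograph_def by blast
  qed
  show ?thesis
  proof (intro equalityI subsetI)
    fix s assume "s \<in> nbr E u \<inter> S"
    hence "s \<in> S" "E u s" by (auto simp: nbr_def)
    thus "s \<in> nbr E v \<inter> S" using key[of s u v] assms(8-10) by (auto simp: nbr_def)
  next
    fix s assume "s \<in> nbr E v \<inter> S"
    hence "s \<in> S" "E v s" by (auto simp: nbr_def)
    thus "s \<in> nbr E u \<inter> S" using key[of s v u] assms(8,9) sym[OF assms(10)] by (auto simp: nbr_def)
  qed
qed

end
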